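(* Let $f:\mathbb{Z}^n\to\mathbb{R}\cup\{+\infty\}$ be a function satisfying condition (SSQM$^\natural$). For $x,y\in\mathrm{dom}\,f$, if $f(x)>f(y)$, then there exist some $i\in\mathrm{supp}^+(x-y)\cup\{0\}$ and $j\in\mathrm{supp}^-(x-y)\cup\{0\}$ satisfying $f(x)>f(x-\chi_i+\chi_j)$.
   Context: $N=\{1,\dots,n\}$. For $i\in N$, $\chi_i\in\{0,1\}^n$ is the characteristic vector of $i$, and $\chi_0=0$. $\mathrm{dom}\,f=\{x\in\mathbb{Z}^n\mid f(x)<+\infty\}$. For $x,y\in\mathbb{Z}^n$, $\mathrm{supp}^+(x-y)=\{i\in N\mid x(i)>y(i)\}$ and $\mathrm{supp}^-(x-y)=\{j\in N\mid x(j)<y(j)\}$. Condition (SSQM$^\natural$): for all $x,y\in\mathrm{dom}\,f$ and all $i\in\mathrm{supp}^+(x-y)$ there exists $j\in\mathrm{supp}^-(x-y)\cup\{0\}$ such that at least one of the following holds: (a) $f(x-\chi_i+\chi_j)<f(x)$; (b) $f(y+\chi_i-\chi_j)<f(y)$; (c) $f(x-\chi_i+\chi_j)=f(x)$ and $f(y+\chi_i-\chi_j)=f(y)$. *)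

theory Defs
  imports "HOL-Analysis.Analysis"
begin

text \<open>Indices in N \<union> {0} are modelled as 'n option, with None playing the role of 0.
  Functions \<int>^n \<rightarrow> \<real> \<union> {+\<infinity>} are ereal-valued functions that never take -\<infinity>.\<close>

definition chi :: "'n::finite option \<Rightarrow> int ^ 'n" where
  "chi i = (case i of None \<Rightarrow> 0 | Some k \<Rightarrow> (\<chi> l. if l = k then 1 else 0))"

definition dom_f :: "(int ^ 'n::finite \<Rightarrow> ereal) \<Rightarrow> (int ^ 'n) set" where
  "dom_f f = {x. f x < \<infinity>}"

definition supp_pos :: "int ^ 'n::finite \<Rightarrow> int ^ 'n \<Rightarrow> 'n set" where
  "supp_pos x y = {i. x $ i > y $ i}"

definition supp_neg :: "int ^ 'n::finite \<Rightarrow> int ^ 'n \<Rightarrow> 'n set" where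
  "supp_neg x y = {j. x $ j < y $ j}"

definition SSQM_nat :: "(int ^ 'n::finite \<Rightarrow> ereal) \<Rightarrow> bool" where
  "SSQM_nat f \<longleftrightarrow>
    (\<forall>x \<in> dom_f f. \<forall>y \<in> dom_f f. \<forall>i \<in> supp_pos x y.
       \<exists>j \<in> Some ` supp_neg x y \<union> {None}.
         f (x - chi (Some i) + chi j) < f x
       \<or> f (y + chi (Some i) - chi j) < f y
       \<or> (f (x - chi (Some i) + chi j) = f x \<and> f (y + chi (Some i) - chi j) = f y))"

end

theory Submission
  imports Defs
begin

lemma chi_nth: "chi a $ l = (if a = Some l then 1 else 0)"
  by (cases a) (auto simp: chi_def)

lemma step_comp:
  assumes "a \<in> Some ` supp_pos x y \<union> {None}" "b \<in> Some ` supp_neg x y \<union> {None}"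
  shows "(y + chi a - chi b) $ l = y $ l + (if a = Some l then 1 else 0) - (if b = Some l then 1 else 0)"
  by (simp add: chi_nth)

lemma step:
  fixes x y :: "int ^ 'n::finite"
  assumes a: "a \<in> Some ` supp_pos x y \<union> {None}" and b: "b \<in> Some ` supp_neg x y \<union> {None}"
    and ab: "a \<noteq> None \<or> b \<noteq> None"
  shows "supp_pos x (y + chi a - chi b) \<subseteq> supp_pos x y"
    "supp_neg x (y + chi a - chi b) \<subseteq> supp_neg x y"
    "(\<Sum>l\<in>UNIV. nat \<bar>x$l - (y + chi a - chi b)$l\<bar>) < (\<Sum>l\<in>UNIV. nat \<bar>x$l - y$l\<bar>)"
proof -
  have c: "\<And>l. (y + chi a - chi b) $ l = y $ l + (if a = Some l then 1 else 0) - (if b = Some l then 1 else 0)"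
    by (simp add: chi_nth)
  show "supp_pos x (y + chi a - chi b) \<subseteq> supp_pos x y"
    using a b unfolding supp_pos_def supp_neg_def c by auto
  show "supp_neg x (y + chi a - chi b) \<subseteq> supp_neg x y"
    using a b unfolding supp_pos_def supp_neg_def c by auto
  have le: "\<forall>l\<in>UNIV. nat \<bar>x$l - (y + chi a - chi b)$l\<bar> \<le> nat \<bar>x$l - y$l\<bar>"
    using a b unfolding supp_pos_def supp_neg_def c by auto
  have lt: "\<exists>l\<in>UNIV. nat \<bar>x$l - (y + chi a - chi b)$l\<bar> < nat \<bar>x$l - y$l\<bar>"
  proof (cases a)
    case None
    then obtain k where "b = Some k" using ab by auto
    then show ?thesis using a b None unfolding supp_pos_def supp_neg_def c
      by (intro bexI[of _ k]) auto
  next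
    case (Some k)
    then show ?thesis using a b unfolding supp_pos_def supp_neg_def c
      by (intro bexI[of _ k]) auto
  qed
  show "(\<Sum>l\<in>UNIV. nat \<bar>x$l - (y + chi a - chi b)$l\<bar>) < (\<Sum>l\<in>UNIV. nat \<bar>x$l - y$l\<bar>)"
    by (rule sum_strict_mono_ex1[OF _ le lt]) simp
qed

lemma aux:
  fixes f :: "int ^ 'n::finite \<Rightarrow> ereal" and x y :: "int ^ 'n"
  assumes S: "SSQM_nat f" and xd: "x \<in> dom_f f"
  shows "y \<in> dom_f f \<Longrightarrow> f y < f x \<Longrightarrow> \<exists>i \<in> Some ` supp_pos x y \<union> {None}. \<exists>j \<in> Some ` supp_neg x y \<union> {None}.
           f x > f (x - chi i + chi j)"
proof (induction "\<Sum>l\<in>UNIV. nat \<bar>x$l - y$l\<bar>" arbitrary: y rule: less_induct)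
  case less
  note yd = less.prems(1) and lt = less.prems(2)
  have red: "?case" if a: "a \<in> Some ` supp_pos x y \<union> {None}" and b: "b \<in> Some ` supp_neg x y \<union> {None}"
    and ab: "a \<noteq> None \<or> b \<noteq> None" and le: "f (y + chi a - chi b) \<le> f y" for a b
  proof -
    note st = step[OF a b ab]
    have "y + chi a - chi b \<in> dom_f f" using yd le unfolding dom_f_def by auto
    moreover have "f (y + chi a - chi b) < f x" using le lt by auto
    ultimately obtain i j where "i \<in> Some ` supp_pos x (y + chi a - chi b) \<union> {None}"
      "j \<in> Some ` supp_neg x (y + chi a - chi b) \<union> {None}" "f x > f (x - chi i + chi j)"
      using less.hyps[OF st(3)] by blast
    then show ?thesis using st(1,2) by blast
  qed
  show ?case
  proof (cases "supp_pos x y = {}")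
    case False
    then obtain i where i: "i \<in> supp_pos x y" by auto
    then obtain j where j: "j \<in> Some ` supp_neg x y \<union> {None}" and
      h: "f (x - chi (Some i) + chi j) < f x
       \<or> f (y + chi (Some i) - chi j) < f y
       \<or> (f (x - chi (Some i) + chi j) = f x \<and> f (y + chi (Some i) - chi j) = f y)"
      using S xd yd unfolding SSQM_nat_def by blast
    show ?thesis
    proof (cases "f (x - chi (Some i) + chi j) < f x")
      case True
      then show ?thesis using i j by blast
    next
      case False
      then have "f (y + chi (Some i) - chi j) \<le> f y" using h by auto
      then show ?thesis using red[of "Some i" j] i j by blast
    qed
  next
    case True
    have "x \<noteq> y" using lt by auto
    then obtain k where "x $ k \<noteq> y $ k" by (auto simp: vec_eq_iff)
    with True have k: "k \<in> supp_pos y x" "k \<in> supp_neg x y"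
      unfolding supp_pos_def supp_neg_def by (auto dest: spec[of _ k])
    obtain j where j: "j \<in> Some ` supp_neg y x \<union> {None}" and
      h: "f (y - chi (Some k) + chi j) < f y
       \<or> f (x + chi (Some k) - chi j) < f x
       \<or> (f (y - chi (Some k) + chi j) = f y \<and> f (x + chi (Some k) - chi j) = f x)"
      using S xd yd k(1) unfolding SSQM_nat_def by blast
    have "supp_neg y x = supp_pos x y" unfolding supp_pos_def supp_neg_def by auto
    then have jN: "j = None" using j True by auto
    show ?thesis
    proof (cases "f (x + chi (Some k)) < f x")
      case True
      then show ?thesis using k by (intro bexI[of _ None] bexI[of _ "Some k"]) (auto simp: chi_def[of None])
    next
      case False
      then have "f (y + chi None - chi (Some k)) \<le> f y" using h jN by (auto simp: chi_def[of None])
      then show ?thesis using red[of None "Some k"] k by blast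
    qed
  qed
qed

theorem lemma2p4:
  fixes f :: "int ^ 'n::finite \<Rightarrow> ereal" and x y :: "int ^ 'n"
  assumes "\<forall>z. f z \<noteq> -\<infinity>"
    and "SSQM_nat f"
    and "x \<in> dom_f f" and "y \<in> dom_f f"
    and "f x > f y"
  shows "\<exists>i \<in> Some ` supp_pos x y \<union> {None}. \<exists>j \<in> Some ` supp_neg x y \<union> {None}.
           f x > f (x - chi i + chi j)"
  using aux[OF assms(2,3,4,5)] .

end
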